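(* Let $\boldsymbol\mu>\mathbf 0$ and assume $\mathbf I-\mathbf G$ is irreducible for every $\mathbf G\in\mathcal G(\boldsymbol\mu)$. Let $\Omega_1,\dots,\Omega_M\subseteq\{1,\dots,N\}$ be nonempty and $\bar p_{\Omega_1},\dots,\bar p_{\Omega_M}>0$, and let $\mathcal P=\{\mathbf p\in\mathbb R^N:\mathbf p\geq\mathbf 0,\ \sum_{i\in\Omega_m}p_i\leq\bar p_{\Omega_m},\ m=1,\dots,M\}$. Then there exists $\mathbf p\in\mathcal P$ with $\mathbf A(\boldsymbol\mu)\mathbf p\geq\mathbf n(\boldsymbol\mu)$ if and only if $$\max_{\mathbf G\in\mathcal G(\boldsymbol\mu)}\ \max_{m\in\{1,\dots,M\}}\ \lambda\Big(\psi\big(\mathbf I-\mathbf G,\ \tfrac{1}{\bar p_{\Omega_m}}\mathbf n_{\mathbf G},\ \Omega_m\big)\Big)\leq 1.$$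
   Context: Multicast system: $N$ transmitters; transmitter $T_i$ has $K_i\geq1$ receivers $R_i^{k}$, $k\in\mathcal K_i=\{1,\dots,K_i\}$. Channel gains $g_{r_i^{k},t_j}\geq 0$ (from $T_j$ to $R_i^k$) with $g_{r_i^{k},t_i}>0$; noise variance $\sigma^2>0$. For $\boldsymbol\mu\in\mathbb R^N$, $\mathbf a_i^{k}(\boldsymbol\mu)\in\mathbb R^{1\times N}$ is the row vector with $i$-th entry $1$ and $j$-th entry $-\mu_i g_{r_i^{k},t_j}/g_{r_i^{k},t_i}$ for $j\neq i$; $n_i^{k}(\boldsymbol\mu)=\mu_i\sigma^2/g_{r_i^{k},t_i}$. $\mathbf A(\boldsymbol\mu)$ stacks all rows $\mathbf a_i^k(\boldsymbol\mu)$ and $\mathbf n(\boldsymbol\mu)$ the corresponding $n_i^k(\boldsymbol\mu)$. $\mathcal G(\boldsymbol\mu)$ is the set of $N\times N$ matrices whose $i$-th row is $\mathbf a_i^{k_i}(\boldsymbol\mu)$ for some $k_i\in\mathcal K_i$; for such $\mathbf G$, $\mathbf n_{\mathbf G}=(n_1^{k_1}(\boldsymbol\mu),\dots,n_N^{k_N}(\boldsymbol\mu))^T$. For a matrix $\mathbf X\in\mathbb R^{N\times N}$, a vector $\mathbf y\in\mathbb R^N$ and $\Omega\subseteq\{1,\dots,N\}$, $\psi(\mathbf X,\mathbf y,\Omega)$ is the matrix obtained from $\mathbf X$ by adding $\mathbf y$ to the $j$-th column for every $j\in\Omega$ (other columns unchanged). $\lambda(\cdot)$ is the Perron–Frobenius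 eigenvalue (spectral radius) of a nonnegative square matrix. *)

theory Defs
  imports "Jordan_Normal_Form.Spectral_Radius"
begin

(* Indexing conventions: transmitters i \<in> {0..<N}; receivers of T_i are k \<in> {1..K i};
   g i k j is the gain from transmitter T_j to receiver R_i^k. *)

definition arow :: "nat \<Rightarrow> (nat \<Rightarrow> nat \<Rightarrow> nat \<Rightarrow> real) \<Rightarrow> (nat \<Rightarrow> real) \<Rightarrow> nat \<Rightarrow> nat \<Rightarrow> real vec" where
  "arow N g \<mu> i k = vec N (\<lambda>j. if j = i then 1 else - \<mu> i * g i k j / g i k i)"

definition nval :: "real \<Rightarrow> (nat \<Rightarrow> nat \<Rightarrow> nat \<Rightarrow> real) \<Rightarrow> (nat \<Rightarrow> real) \<Rightarrow> nat \<Rightarrow> nat \<Rightarrow> real" where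
  "nval \<sigma>2 g \<mu> i k = \<mu> i * \<sigma>2 / g i k i"

definition selections :: "nat \<Rightarrow> (nat \<Rightarrow> nat) \<Rightarrow> (nat \<Rightarrow> nat) set" where
  "selections N K = {ks. \<forall>i<N. ks i \<in> {1..K i}}"

definition Gmat :: "nat \<Rightarrow> (nat \<Rightarrow> nat \<Rightarrow> nat \<Rightarrow> real) \<Rightarrow> (nat \<Rightarrow> real) \<Rightarrow> (nat \<Rightarrow> nat) \<Rightarrow> real mat" where
  "Gmat N g \<mu> ks = mat N N (\<lambda>(i,j). arow N g \<mu> i (ks i) $ j)"

definition nG :: "nat \<Rightarrow> real \<Rightarrow> (nat \<Rightarrow> nat \<Rightarrow> nat \<Rightarrow> real) \<Rightarrow> (nat \<Rightarrow> real) \<Rightarrow> (nat \<Rightarrow> nat) \<Rightarrow> real vec" where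
  "nG N \<sigma>2 g \<mu> ks = vec N (\<lambda>i. nval \<sigma>2 g \<mu> i (ks i))"

definition Gset :: "nat \<Rightarrow> (nat \<Rightarrow> nat) \<Rightarrow> (nat \<Rightarrow> nat \<Rightarrow> nat \<Rightarrow> real) \<Rightarrow> (nat \<Rightarrow> real) \<Rightarrow> real mat set" where
  "Gset N K g \<mu> = Gmat N g \<mu> ` selections N K"

definition psi :: "real mat \<Rightarrow> real vec \<Rightarrow> nat set \<Rightarrow> real mat" where
  "psi X y \<Omega> = mat (dim_row X) (dim_col X) (\<lambda>(i,j). X $$ (i,j) + (if j \<in> \<Omega> then y $ i else 0))"

definition irreducible_mat :: "real mat \<Rightarrow> bool" where
  "irreducible_mat A \<longleftrightarrow> (\<exists>n. A \<in> carrier_mat n n \<and>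
     (\<forall>i<n. \<forall>j<n. i \<noteq> j \<longrightarrow> (i,j) \<in> {(a,b). a < n \<and> b < n \<and> A $$ (a,b) \<noteq> 0}\<^sup>+))"

(* Perron-Frobenius eigenvalue = spectral radius *)
definition pf_eig :: "real mat \<Rightarrow> real" where
  "pf_eig A = spectral_radius (map_mat complex_of_real A)"

end

theory Submission
  imports Defs
begin

lemma mv_eq: assumes "B \<in> carrier_mat n n" "v \<in> carrier_vec n" "i < n"
  shows "(B *\<^sub>v v) $ i = (\<Sum>j\<in>{0..<n}. B $$ (i,j) * v $ j)"
  using assms by (auto simp: scalar_prod_def)

lemma cmv_eq: assumes "B \<in> carrier_mat n n" "v \<in> carrier_vec n" "i < n"
  shows "(map_mat complex_of_real B *\<^sub>v v) $ i = (\<Sum>j\<in>{0..<n}. complex_of_real (B $$ (i,j)) * v $ j)"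
  using assms by (auto simp: scalar_prod_def)

lemma exp_poly_contra:
  fixes r a C1 C2 :: real
  assumes r: "1 < r" and a: "0 < a" and C: "0 \<le> C1" "0 \<le> C2"
    and bnd: "\<And>k. r ^ k * a \<le> C1 + C2 * real k ^ d"
  shows False
proof -
  define s where "s = sqrt r"
  have s1: "1 < s" using r by (simp add: s_def)
  have ss: "s * s = r" using r by (simp add: s_def)
  have b: "0 < 1/s" "1/s < 1" using s1 by auto
  from poly_exp_bound[OF b, of d] obtain P where P: "\<And>k. (1/s) ^ k * real k ^ d \<le> P" by auto
  have P0: "0 \<le> P" using P[of 1] b by (smt (verit) mult_nonneg_nonneg of_nat_0_le_iff zero_le_power)
  have kd: "real k ^ d \<le> P * s ^ k" for k
  proof -
    have "(1/s) ^ k * real k ^ d * s ^ k \<le> P * s ^ k"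
      using P[of k] s1 by (intro mult_right_mono) auto
    moreover have "(1/s) ^ k * s ^ k = 1" using s1 by (simp add: power_one_over field_simps)
    moreover have "(1/s) ^ k * real k ^ d * s ^ k = real k ^ d * ((1/s) ^ k * s ^ k)" by (simp only: ac_simps)
    ultimately show ?thesis by simp
  qed
  have main: "s ^ k * a \<le> C1 + C2 * P" for k
  proof -
    have sk: "1 \<le> s ^ k" using s1 by simp
    have "s ^ k * (s ^ k * a) = r ^ k * a" using ss by (simp add: power_mult_distrib[symmetric])
    also have "\<dots> \<le> C1 + C2 * real k ^ d" by (rule bnd)
    also have "\<dots> \<le> C1 * s ^ k + C2 * (P * s ^ k)"
      using kd[of k] C sk by (intro add_mono mult_left_mono) (auto simp: mult_le_cancel_left1)
    also have "\<dots> = s ^ k * (C1 + C2 * P)" by (simp add: algebra_simps)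
    finally show ?thesis using sk by (simp add: mult_le_cancel_left_pos)
  qed
  obtain k where "(C1 + C2 * P) / a < s ^ k" using real_arch_pow[OF s1] by auto
  with main[of k] a show False by (simp add: field_simps)
qed

lemma growth:
  fixes B :: "real mat" and x :: "real vec"
  assumes B: "B \<in> carrier_mat n n" and n: "0 < n"
    and Bnn: "\<forall>i<n. \<forall>j<n. 0 \<le> B $$ (i,j)"
    and x: "x \<in> carrier_vec n" and xpos: "\<forall>i<n. 0 < x $ i"
    and Bx: "\<forall>i<n. r * x $ i \<le> (B *\<^sub>v x) $ i" and r: "1 < r"
  shows "1 < spectral_radius (map_mat complex_of_real B)"
proof (rule ccontr)
  assume "\<not> ?thesis"
  hence le: "spectral_radius (map_mat complex_of_real B) \<le> 1" by simp
  have CB: "map_mat complex_of_real B \<in> carrier_mat n n" using B by simp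
  from spectral_radius_jnf_norm_bound_le_1_upper_triangular[OF CB le]
  obtain c1 c2 where bnd: "\<And>k. norm_bound (map_mat complex_of_real B ^\<^sub>m k) (c1 + c2 * of_nat k ^ (n - 1))"
    by auto
  have powc: "B ^\<^sub>m k \<in> carrier_mat n n" for k using B by simp
  have pownn: "\<forall>i<n. \<forall>j<n. 0 \<le> (B ^\<^sub>m k) $$ (i,j)" for k
  proof (induct k)
    case 0 then show ?case using B by auto
  next
    case (Suc k)
    show ?case
    proof (intro allI impI)
      fix i j assume ij: "i < n" "j < n"
      have "(B ^\<^sub>m Suc k) $$ (i,j) = (\<Sum>l\<in>{0..<n}. (B ^\<^sub>m k) $$ (i,l) * B $$ (l,j))"
        using ij powc[of k] B by (simp add: scalar_prod_def)
      also have "\<dots> \<ge> 0" using Suc ij Bnn by (intro sum_nonneg mult_nonneg_nonneg) auto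
      finally show "0 \<le> (B ^\<^sub>m Suc k) $$ (i,j)" .
    qed
  qed
  have grow: "\<forall>i<n. r ^ k * x $ i \<le> (B ^\<^sub>m k *\<^sub>v x) $ i" for k
  proof (induct k)
    case 0 then show ?case using x B by simp
  next
    case (Suc k)
    show ?case
    proof (intro allI impI)
      fix i assume i: "i < n"
      have e0: "(B ^\<^sub>m Suc k *\<^sub>v x) = B ^\<^sub>m k *\<^sub>v (B *\<^sub>v x)"
        using assoc_mult_mat_vec[OF powc[of k] B x] by simp
      have e1: "(B ^\<^sub>m k *\<^sub>v (B *\<^sub>v x)) $ i = (\<Sum>j\<in>{0..<n}. (B ^\<^sub>m k) $$ (i,j) * (B *\<^sub>v x) $ j)"
        using mv_eq[OF powc[of k] _ i, of "B *\<^sub>v x"] B x by simp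
      have e2: "(\<Sum>j\<in>{0..<n}. (B ^\<^sub>m k) $$ (i,j) * (r * x $ j)) \<le> (\<Sum>j\<in>{0..<n}. (B ^\<^sub>m k) $$ (i,j) * (B *\<^sub>v x) $ j)"
        using pownn[of k] i Bx by (intro sum_mono mult_left_mono) auto
      have e3: "(\<Sum>j\<in>{0..<n}. (B ^\<^sub>m k) $$ (i,j) * (r * x $ j)) = r * (B ^\<^sub>m k *\<^sub>v x) $ i"
        using mv_eq[OF powc[of k] x i] by (simp add: sum_distrib_left algebra_simps)
      have e4: "r * (r ^ k * x $ i) \<le> r * (B ^\<^sub>m k *\<^sub>v x) $ i"
        using Suc i r by (intro mult_left_mono) auto
      show "r ^ Suc k * x $ i \<le> (B ^\<^sub>m Suc k *\<^sub>v x) $ i"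
        using e0 e1 e2 e3 e4 by (simp add: algebra_simps)
    qed
  qed
  define X where "X = (\<Sum>j\<in>{0..<n}. x $ j)"
  have X0: "0 \<le> X" using xpos unfolding X_def by (intro sum_nonneg) (auto intro: less_imp_le)
  have upper: "r ^ k * x $ 0 \<le> (\<bar>c1\<bar> * X) + (\<bar>c2\<bar> * X) * real k ^ (n - 1)" for k
  proof -
    have ent: "\<bar>(B ^\<^sub>m k) $$ (0,j)\<bar> \<le> c1 + c2 * real k ^ (n - 1)" if j: "j < n" for j
    proof -
      have "map_mat complex_of_real B ^\<^sub>m k = map_mat complex_of_real (B ^\<^sub>m k)"
        by (rule of_real_hom.mat_hom_pow[OF B, of k, symmetric])
      hence eq: "map_mat complex_of_real B ^\<^sub>m k = map_mat complex_of_real (B ^\<^sub>m k)" .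
      show ?thesis
        using bnd[of k, unfolded norm_bound_def] j n powc[of k] B unfolding eq by auto
    qed
    have "r ^ k * x $ 0 \<le> (B ^\<^sub>m k *\<^sub>v x) $ 0" using grow n by auto
    also have "\<dots> = (\<Sum>j\<in>{0..<n}. (B ^\<^sub>m k) $$ (0,j) * x $ j)" using mv_eq[OF powc x n] .
    also have "\<dots> \<le> (\<Sum>j\<in>{0..<n}. (\<bar>c1\<bar> + \<bar>c2\<bar> * real k ^ (n - 1)) * x $ j)"
    proof (intro sum_mono mult_right_mono)
      fix j assume "j \<in> {0..<n}"
      hence j: "j < n" by auto
      have "c1 + c2 * real k ^ (n - 1) \<le> \<bar>c1\<bar> + \<bar>c2\<bar> * real k ^ (n - 1)"
        by (intro add_mono mult_right_mono) auto
      then show "(B ^\<^sub>m k) $$ (0,j) \<le> \<bar>c1\<bar> + \<bar>c2\<bar> * real k ^ (n - 1)" using ent[OF j] by linarith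
      show "0 \<le> x $ j" using xpos j by (auto intro: less_imp_le)
    qed
    also have "\<dots> = (\<bar>c1\<bar> * X) + (\<bar>c2\<bar> * X) * real k ^ (n - 1)"
      unfolding X_def by (simp add: sum_distrib_left algebra_simps)
    finally show ?thesis .
  qed
  show False
    by (rule exp_poly_contra[OF r _ _ _ upper]) (use xpos n X0 in auto)
qed

lemma growth2:
  fixes B :: "real mat" and x :: "real vec"
  assumes B: "B \<in> carrier_mat n n" and n: "0 < n"
    and Bnn: "\<forall>i<n. \<forall>j<n. 0 \<le> B $$ (i,j)"
    and x: "x \<in> carrier_vec n" and xpos: "\<forall>i<n. 0 < x $ i"
    and Bx: "\<forall>i<n. x $ i + \<delta> i \<le> (B *\<^sub>v x) $ i" and d: "\<forall>i<n. 0 < \<delta> i"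
  shows "1 < spectral_radius (map_mat complex_of_real B)"
proof -
  define \<epsilon> where "\<epsilon> = Min ((\<lambda>i. \<delta> i / x $ i) ` {0..<n})"
  have e0: "0 < \<epsilon>" unfolding \<epsilon>_def using n d xpos by (subst Min_gr_iff) auto
  have ele: "\<epsilon> \<le> \<delta> i / x $ i" if "i < n" for i unfolding \<epsilon>_def using that by (intro Min_le) auto
  show ?thesis
  proof (rule growth[OF B n Bnn x xpos _ _])
    show "1 < 1 + \<epsilon>" using e0 by simp
    show "\<forall>i<n. (1 + \<epsilon>) * x $ i \<le> (B *\<^sub>v x) $ i"
    proof (intro allI impI)
      fix i assume i: "i < n"
      have "\<epsilon> * x $ i \<le> (\<delta> i / x $ i) * x $ i" using ele[OF i] xpos i by (intro mult_right_mono) auto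
      also have "\<dots> = \<delta> i" proof - have "0 < x $ i" using xpos i by blast thus ?thesis by simp qed
      finally have "\<epsilon> * x $ i \<le> \<delta> i" .
      moreover have "x $ i + \<delta> i \<le> (B *\<^sub>v x) $ i" using Bx i by blast
      ultimately show "(1 + \<epsilon>) * x $ i \<le> (B *\<^sub>v x) $ i" by (simp add: algebra_simps)
    qed
  qed
qed

lemma sr_le1:
  fixes B :: "real mat" and p :: "real vec"
  assumes B: "B \<in> carrier_mat n n" and n: "0 < n"
    and Bnn: "\<forall>i<n. \<forall>j<n. 0 \<le> B $$ (i,j)"
    and p: "p \<in> carrier_vec n" and ppos: "\<forall>i<n. 0 < p $ i"
    and Bp: "\<forall>i<n. (B *\<^sub>v p) $ i \<le> p $ i"
  shows "spectral_radius (map_mat complex_of_real B) \<le> 1"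
proof -
  have CB: "map_mat complex_of_real B \<in> carrier_mat n n" using B by simp
  from spectral_radius_mem_max(1)[OF CB n] obtain lam where
    lam: "lam \<in> spectrum (map_mat complex_of_real B)"
    and eq: "spectral_radius (map_mat complex_of_real B) = norm lam" by auto
  from lam obtain v where ev: "eigenvector (map_mat complex_of_real B) v lam"
    unfolding spectrum_def eigenvalue_def by auto
  hence v: "v \<in> carrier_vec n" and v0: "v \<noteq> 0\<^sub>v n"
    and Bv: "map_mat complex_of_real B *\<^sub>v v = lam \<cdot>\<^sub>v v"
    unfolding eigenvector_def using B by auto
  obtain j0 where j0: "j0 < n" "v $ j0 \<noteq> 0"
    using v v0 by (metis eq_vecI index_zero_vec(1) index_zero_vec(2) carrier_vecD)
  define q where "q i = norm (v $ i) / p $ i" for i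
  define c where "c = Max (q ` {0..<n})"
  have qc: "q i \<le> c" if "i < n" for i unfolding c_def using that by (intro Max_ge) auto
  have "c \<in> q ` {0..<n}" unfolding c_def using n by (intro Max_in) auto
  then obtain i0 where i0: "i0 < n" and ci0: "c = q i0" by auto
  have "0 < q j0" unfolding q_def using j0 ppos by auto
  hence c0: "0 < c" using qc[OF j0(1)] by simp
  have pi0: "p $ i0 \<noteq> 0" proof - have "0 < p $ i0" using ppos i0 by blast thus ?thesis by simp qed
  have nvi0: "norm (v $ i0) = c * p $ i0" using ci0 pi0 unfolding q_def by simp
  have nvi0pos: "0 < norm (v $ i0)" using nvi0 c0 ppos i0 by simp
  have "norm lam * norm (v $ i0) = norm ((map_mat complex_of_real B *\<^sub>v v) $ i0)"
    using Bv i0 v by (simp add: norm_mult)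
  also have "\<dots> = norm (\<Sum>j\<in>{0..<n}. complex_of_real (B $$ (i0,j)) * v $ j)"
    using cmv_eq[OF B v i0] by simp
  also have "\<dots> \<le> (\<Sum>j\<in>{0..<n}. norm (complex_of_real (B $$ (i0,j)) * v $ j))"
    by (rule norm_sum)
  also have "\<dots> = (\<Sum>j\<in>{0..<n}. B $$ (i0,j) * norm (v $ j))"
    using Bnn i0 by (intro sum.cong) (auto simp: norm_mult)
  also have "\<dots> \<le> (\<Sum>j\<in>{0..<n}. B $$ (i0,j) * (c * p $ j))"
  proof (intro sum_mono mult_left_mono)
    fix j assume "j \<in> {0..<n}"
    hence j: "j < n" by auto
    have "norm (v $ j) / p $ j \<le> c" using qc[OF j] unfolding q_def .
    thus "norm (v $ j) \<le> c * p $ j" using ppos j by (simp add: divide_le_eq)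
    show "0 \<le> B $$ (i0,j)" using Bnn i0 j by auto
  qed
  also have "\<dots> = c * (B *\<^sub>v p) $ i0"
    using mv_eq[OF B p i0] by (simp add: sum_distrib_left algebra_simps)
  also have "\<dots> \<le> c * p $ i0" using Bp i0 c0 by (intro mult_left_mono) auto
  also have "\<dots> = norm (v $ i0)" using nvi0 by simp
  finally have "norm lam * norm (v $ i0) \<le> 1 * norm (v $ i0)" by simp
  hence "norm lam \<le> 1" using nvi0pos by (simp only: mult_le_cancel_right_pos)
  thus ?thesis using eq by simp
qed

lemma mv_mono:
  fixes B :: "real mat"
  assumes B: "B \<in> carrier_mat n n" and Bnn: "\<forall>i<n. \<forall>j<n. 0 \<le> B $$ (i,j)"
    and y: "y \<in> carrier_vec n" and z: "z \<in> carrier_vec n" and yz: "\<forall>j<n. y $ j \<le> z $ j"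
    and i: "i < n"
  shows "(B *\<^sub>v y) $ i \<le> (B *\<^sub>v z) $ i"
  unfolding mv_eq[OF B y i] mv_eq[OF B z i]
  using Bnn yz i by (intro sum_mono mult_left_mono) auto

lemma mv_nonneg:
  fixes B :: "real mat"
  assumes B: "B \<in> carrier_mat n n" and Bnn: "\<forall>i<n. \<forall>j<n. 0 \<le> B $$ (i,j)"
    and y: "y \<in> carrier_vec n" and yz: "\<forall>j<n. 0 \<le> y $ j"
    and i: "i < n"
  shows "0 \<le> (B *\<^sub>v y) $ i"
  unfolding mv_eq[OF B y i]
  using Bnn yz i by (intro sum_nonneg mult_nonneg_nonneg) auto

lemma positivize:
  fixes B :: "real mat" and w :: "real vec"
  assumes B: "B \<in> carrier_mat n n" and Bnn: "\<forall>i<n. \<forall>j<n. 0 \<le> B $$ (i,j)"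
    and irr: "\<forall>i<n. \<forall>j<n. i \<noteq> j \<longrightarrow> (i,j) \<in> {(a,b). a < n \<and> b < n \<and> B $$ (a,b) \<noteq> 0}\<^sup>+"
    and w: "w \<in> carrier_vec n" and wnn: "\<forall>i<n. 0 \<le> w $ i" and j0: "j0 < n" "0 < w $ j0"
    and Bw: "\<forall>i<n. w $ i \<le> (B *\<^sub>v w) $ i"
  shows "\<exists>u \<in> carrier_vec n. (\<forall>i<n. 0 < u $ i) \<and> (\<forall>i<n. u $ i \<le> (B *\<^sub>v u) $ i)"
proof -
  define it where "it k = ((\<lambda>y. B *\<^sub>v y) ^^ k) w" for k
  have it_Suc: "it (Suc k) = B *\<^sub>v it k" for k unfolding it_def by simp
  have itc: "it k \<in> carrier_vec n" for k
    by (induct k) (use w B in \<open>auto simp: it_def\<close>)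
  have itnn: "\<forall>i<n. 0 \<le> it k $ i" for k
  proof (induct k)
    case 0 then show ?case using wnn by (simp add: it_def)
  next
    case (Suc k) then show ?case unfolding it_Suc using mv_nonneg[OF B Bnn itc[of k]] by auto
  qed
  have itinc: "\<forall>i<n. it k $ i \<le> it (Suc k) $ i" for k
  proof (induct k)
    case 0 then show ?case using Bw by (simp add: it_def)
  next
    case (Suc k) then show ?case unfolding it_Suc[of "Suc k"] it_Suc[of k]
      using mv_mono[OF B Bnn itc[of k] itc[of "Suc k"]] by (auto simp: it_Suc)
  qed
  have itmono: "it k $ i \<le> it l $ i" if "k \<le> l" "i < n" for k l i
    using lift_Suc_mono_le[of "\<lambda>k. it k $ i", OF _ that(1)] itinc that(2) by auto
  define E where "E = {(a,b). a < n \<and> b < n \<and> B $$ (a,b) \<noteq> 0}"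
  define P where "P x = (\<exists>k. 0 < it k $ x)" for x
  have stepP: "P a" if ac: "(a,c) \<in> E" and Pc: "P c" for a c
  proof -
    from Pc obtain k where k: "0 < it k $ c" unfolding P_def by auto
    have a: "a < n" and c: "c < n" and Bac: "B $$ (a,c) \<noteq> 0" using ac unfolding E_def by auto
    have Bac': "0 < B $$ (a,c)" using Bac Bnn a c by (metis order_le_less)
    have "0 < B $$ (a,c) * it k $ c" using Bac' k by simp
    also have "\<dots> \<le> (\<Sum>l\<in>{0..<n}. B $$ (a,l) * it k $ l)"
      by (rule member_le_sum) (use c Bnn a itnn in auto)
    also have "\<dots> = it (Suc k) $ a" unfolding it_Suc using mv_eq[OF B itc a] by simp
    finally show ?thesis unfolding P_def by blast
  qed
  have path: "P a" if "(a,b) \<in> E\<^sup>+" "P b" for a b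
    using that(1)
  proof (induct rule: converse_trancl_induct)
    case (base y) then show ?case using stepP that(2) by blast
  next
    case (step y z) then show ?case using stepP by blast
  qed
  have allP: "P i" if "i < n" for i
  proof (cases "i = j0")
    case True then show ?thesis unfolding P_def using j0 by (intro exI[of _ 0]) (simp add: it_def)
  next
    case False
    hence "(i,j0) \<in> E\<^sup>+" using irr that j0 unfolding E_def by auto
    moreover have "P j0" unfolding P_def using j0 by (intro exI[of _ 0]) (simp add: it_def)
    ultimately show ?thesis by (rule path)
  qed
  then obtain kf where kf: "\<And>i. i < n \<Longrightarrow> 0 < it (kf i) $ i" unfolding P_def by metis
  define L where "L = Max (kf ` {0..<n})"
  have kL: "kf i \<le> L" if "i < n" for i unfolding L_def using that by (intro Max_ge) auto
  show ?thesis
  proof (intro bexI[of _ "it L"] conjI allI impI)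
    fix i assume i: "i < n"
    show "0 < it L $ i" using kf[OF i] itmono[OF kL[OF i] i] by simp
    show "it L $ i \<le> (B *\<^sub>v it L) $ i" using itinc i unfolding it_Suc by auto
  qed (rule itc)
qed

lemma solve:
  fixes F :: "real mat"
  assumes F: "F \<in> carrier_mat n n"
    and inj: "\<And>v. v \<in> carrier_vec n \<Longrightarrow> F *\<^sub>v v = v \<Longrightarrow> v = 0\<^sub>v n"
    and y: "y \<in> carrier_vec n"
  shows "\<exists>p \<in> carrier_vec n. \<forall>i<n. p $ i = (F *\<^sub>v p) $ i + y $ i"
proof -
  define A where "A = 1\<^sub>m n - F"
  have A: "A \<in> carrier_mat n n" unfolding A_def using minus_carrier_mat[OF F] by blast
  have Av: "(A *\<^sub>v v) $ i = v $ i - (F *\<^sub>v v) $ i" if "v \<in> carrier_vec n" "i < n" for v i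
    unfolding A_def using that F minus_mult_distrib_mat_vec[OF one_carrier_mat F that(1)] by simp
  have "det A \<noteq> 0"
  proof
    assume "det A = 0"
    from this[unfolded det_0_iff_vec_prod_zero[OF A]] obtain v where
      v: "v \<in> carrier_vec n" "v \<noteq> 0\<^sub>v n" "A *\<^sub>v v = 0\<^sub>v n" by auto
    have "F *\<^sub>v v = v"
    proof (rule eq_vecI)
      fix i assume "i < dim_vec v"
      hence i: "i < n" using v by auto
      have "(A *\<^sub>v v) $ i = 0" using v(3) i by simp
      thus "(F *\<^sub>v v) $ i = v $ i" using Av[OF v(1) i] by simp
    qed (use F v in auto)
    with inj v show False by auto
  qed
  from det_non_zero_imp_unit[OF A this, of undefined]
  obtain A' where A': "A' \<in> carrier_mat n n" "A * A' = 1\<^sub>m n"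
    unfolding Units_def ring_mat_def by auto
  define p where "p = A' *\<^sub>v y"
  have p: "p \<in> carrier_vec n" unfolding p_def using A' y by simp
  have "A *\<^sub>v p = y" unfolding p_def
    using assoc_mult_mat_vec[OF A A'(1) y, symmetric] A'(2) y by simp
  hence "\<forall>i<n. p $ i = (F *\<^sub>v p) $ i + y $ i" using Av[OF p] by auto
  with p show ?thesis by blast
qed

lemma mv_diff:
  fixes B :: "real mat"
  assumes B: "B \<in> carrier_mat n n" and y: "y \<in> carrier_vec n" and z: "z \<in> carrier_vec n" and i: "i < n"
  shows "(B *\<^sub>v vec n (\<lambda>j. y $ j - z $ j)) $ i = (B *\<^sub>v y) $ i - (B *\<^sub>v z) $ i"
  unfolding mv_eq[OF B y i] mv_eq[OF B z i] mv_eq[OF B _ i, of "vec n (\<lambda>j. y $ j - z $ j)", OF vec_carrier]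
  by (simp add: sum_subtractf[symmetric] right_diff_distrib)

lemma mv_neg:
  fixes B :: "real mat"
  assumes B: "B \<in> carrier_mat n n" and y: "y \<in> carrier_vec n" and i: "i < n"
  shows "(B *\<^sub>v vec n (\<lambda>j. - y $ j)) $ i = - (B *\<^sub>v y) $ i"
  unfolding mv_eq[OF B y i] mv_eq[OF B _ i, of "vec n (\<lambda>j. - y $ j)", OF vec_carrier]
  by (simp add: sum_negf[symmetric])

definition frow :: "(nat \<Rightarrow> nat \<Rightarrow> nat \<Rightarrow> real) \<Rightarrow> (nat \<Rightarrow> real) \<Rightarrow> nat \<Rightarrow> nat \<Rightarrow> nat \<Rightarrow> real" where
  "frow g \<mu> i k j = (if j = i then 0 else \<mu> i * g i k j / g i k i)"

lemma F_carrier: "1\<^sub>m N - Gmat N g \<mu> ks \<in> carrier_mat N N"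
  unfolding Gmat_def by (rule minus_carrier_mat) simp

lemma F_idx: assumes "i < N" "j < N"
  shows "(1\<^sub>m N - Gmat N g \<mu> ks) $$ (i,j) = frow g \<mu> i (ks i) j"
  using assms by (simp add: Gmat_def arow_def frow_def)

lemma F_mv: assumes p: "p \<in> carrier_vec N" and i: "i < N"
  shows "((1\<^sub>m N - Gmat N g \<mu> ks) *\<^sub>v p) $ i = (\<Sum>j\<in>{0..<N}. frow g \<mu> i (ks i) j * p $ j)"
  unfolding mv_eq[OF F_carrier p i] using i by (intro sum.cong) (auto simp: F_idx)

lemma arow_eq: assumes p: "p \<in> carrier_vec N" and i: "i < N"
  shows "arow N g \<mu> i k \<bullet> p = p $ i - (\<Sum>j\<in>{0..<N}. frow g \<mu> i k j * p $ j)"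
proof -
  have "arow N g \<mu> i k \<bullet> p = (\<Sum>j\<in>{0..<N}. (if j = i then 1 else 0) * p $ j - frow g \<mu> i k j * p $ j)"
    unfolding scalar_prod_def using p by (intro sum.cong) (auto simp: arow_def frow_def algebra_simps)
  also have "\<dots> = (\<Sum>j\<in>{0..<N}. (if j = i then 1 else 0) * p $ j) - (\<Sum>j\<in>{0..<N}. frow g \<mu> i k j * p $ j)"
    by (rule sum_subtractf)
  also have "(\<Sum>j\<in>{0..<N}. (if j = i then 1 else 0) * p $ j) = p $ i"
  proof -
    have "(\<Sum>j\<in>{0..<N}. (if j = i then 1 else 0) * p $ j) = (\<Sum>j\<in>{0..<N}. if i = j then p $ j else 0)"
      by (intro sum.cong) auto
    also have "\<dots> = p $ i" using i by simp
    finally show ?thesis .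
  qed
  finally show ?thesis .
qed

lemma nG_idx: "i < N \<Longrightarrow> nG N \<sigma>2 g \<mu> ks $ i = nval \<sigma>2 g \<mu> i (ks i)"
  and nG_carrier: "nG N \<sigma>2 g \<mu> ks \<in> carrier_vec N"
  by (auto simp: nG_def)

lemma psi_carrier: "X \<in> carrier_mat N N \<Longrightarrow> psi X y \<Omega> \<in> carrier_mat N N"
  by (auto simp: psi_def)

lemma psi_mv:
  fixes X :: "real mat"
  assumes X: "X \<in> carrier_mat N N" and y: "y \<in> carrier_vec N" and p: "p \<in> carrier_vec N"
    and Om: "\<Omega> \<subseteq> {0..<N}" and i: "i < N"
  shows "(psi X y \<Omega> *\<^sub>v p) $ i = (X *\<^sub>v p) $ i + y $ i * (\<Sum>j\<in>\<Omega>. p $ j)"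
proof -
  have "(psi X y \<Omega> *\<^sub>v p) $ i = (\<Sum>j\<in>{0..<N}. (X $$ (i,j) + (if j \<in> \<Omega> then y $ i else 0)) * p $ j)"
    unfolding mv_eq[OF psi_carrier[OF X] p i] using X i by (intro sum.cong) (auto simp: psi_def)
  also have "\<dots> = (X *\<^sub>v p) $ i + (\<Sum>j\<in>{0..<N}. (if j \<in> \<Omega> then y $ i * p $ j else 0))"
  proof -
    have "(\<Sum>j\<in>{0..<N}. (X $$ (i,j) + (if j \<in> \<Omega> then y $ i else 0)) * p $ j)
      = (\<Sum>j\<in>{0..<N}. X $$ (i,j) * p $ j + (if j \<in> \<Omega> then y $ i * p $ j else 0))"
      by (intro sum.cong) (auto simp: distrib_right)
    then show ?thesis unfolding mv_eq[OF X p i] by (simp add: sum.distrib)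
  qed
  also have "(\<Sum>j\<in>{0..<N}. (if j \<in> \<Omega> then y $ i * p $ j else 0)) = (\<Sum>j\<in>\<Omega>. y $ i * p $ j)"
    using Om by (simp add: sum.If_cases Int_absorb1)
  finally show ?thesis by (simp add: sum_distrib_left)
qed

lemma Gmat_cong: "(\<forall>i<N. ks i = ks' i) \<Longrightarrow> Gmat N g \<mu> ks = Gmat N g \<mu> ks'"
  by (auto simp: Gmat_def intro!: eq_matI)

lemma nG_cong: "(\<forall>i<N. ks i = ks' i) \<Longrightarrow> nG N \<sigma>2 g \<mu> ks = nG N \<sigma>2 g \<mu> ks'"
  by (auto simp: nG_def intro!: eq_vecI)

definition tofun :: "nat \<Rightarrow> nat list \<Rightarrow> nat \<Rightarrow> nat" where
  "tofun N xs i = (if i < N then xs ! i else 1)"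

lemma finite_XS: fixes K :: "nat \<Rightarrow> nat" shows "finite {xs. set xs \<subseteq> (\<Union>i<N. {1..K i}) \<and> length xs = N}"
  by (rule finite_lists_length_eq) auto

lemma Max_set_iff:
  fixes f :: "(nat \<Rightarrow> nat) \<Rightarrow> nat \<Rightarrow> real" and K :: "nat \<Rightarrow> nat"
  assumes cong: "\<And>ks ks' m. (\<forall>i<N. ks i = ks' i) \<Longrightarrow> f ks m = f ks' m"
    and M: "1 \<le> M" and K: "\<forall>i<N. 1 \<le> K i"
  shows "Max {f ks m | ks m. ks \<in> selections N K \<and> m < M} \<le> 1
     \<longleftrightarrow> (\<forall>ks\<in>selections N K. \<forall>m<M. f ks m \<le> 1)"
proof -
  define XS where "XS = {xs. set xs \<subseteq> (\<Union>i<N. {1..K i}) \<and> length xs = N}"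
  let ?S = "{f ks m | ks m. ks \<in> selections N K \<and> m < M}"
  have sub: "?S \<subseteq> (\<lambda>(xs,m). f (tofun N xs) m) ` (XS \<times> {..<M})"
  proof
    fix x assume "x \<in> ?S"
    then obtain ks m where x: "x = f ks m" and ks: "ks \<in> selections N K" and m: "m < M" by auto
    define xs where "xs = map ks [0..<N]"
    have "xs \<in> XS" using ks unfolding XS_def xs_def selections_def by auto
    moreover have "f (tofun N xs) m = f ks m" by (rule cong) (auto simp: tofun_def xs_def)
    ultimately show "x \<in> (\<lambda>(xs,m). f (tofun N xs) m) ` (XS \<times> {..<M})" using x m by force
  qed
  have fin: "finite ?S"
    by (rule finite_subset[OF sub]) (intro finite_imageI finite_cartesian_product, use finite_XS[of K N] in \<open>auto simp: XS_def\<close>)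
  have "(\<lambda>i. 1) \<in> selections N K" using K unfolding selections_def by auto
  hence "f (\<lambda>i. 1) 0 \<in> ?S" using M by (intro CollectI exI[of _ "\<lambda>i. 1"] exI[of _ 0]) auto
  hence ne: "?S \<noteq> {}" by blast
  show ?thesis using Max_le_iff[OF fin ne] by blast
qed

theorem theorem6:
  fixes N M :: nat and K :: "nat \<Rightarrow> nat" and g :: "nat \<Rightarrow> nat \<Rightarrow> nat \<Rightarrow> real"
    and \<sigma>2 :: real and \<mu> :: "nat \<Rightarrow> real"
    and \<Omega> :: "nat \<Rightarrow> nat set" and pbar :: "nat \<Rightarrow> real"
  assumes N_pos: "0 < N" and M_pos: "1 \<le> M"
    and K_pos: "\<forall>i<N. 1 \<le> K i"
    and g_nonneg: "\<forall>i<N. \<forall>k\<in>{1..K i}. \<forall>j<N. 0 \<le> g i k j"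
    and g_direct: "\<forall>i<N. \<forall>k\<in>{1..K i}. 0 < g i k i"
    and sigma_pos: "0 < \<sigma>2"
    and mu_pos: "\<forall>i<N. 0 < \<mu> i"
    and irred: "\<forall>G\<in>Gset N K g \<mu>. irreducible_mat (1\<^sub>m N - G)"
    and Omega: "\<forall>m<M. \<Omega> m \<subseteq> {0..<N} \<and> \<Omega> m \<noteq> {}"
    and pbar_pos: "\<forall>m<M. 0 < pbar m"
  shows "(\<exists>p \<in> carrier_vec N.
            (\<forall>i<N. 0 \<le> p $ i) \<and>
            (\<forall>m<M. (\<Sum>i\<in>\<Omega> m. p $ i) \<le> pbar m) \<and>
            (\<forall>i<N. \<forall>k\<in>{1..K i}. arow N g \<mu> i k \<bullet> p \<ge> nval \<sigma>2 g \<mu> i k))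
     \<longleftrightarrow>
     Max {pf_eig (psi (1\<^sub>m N - Gmat N g \<mu> ks) ((1 / pbar m) \<cdot>\<^sub>v nG N \<sigma>2 g \<mu> ks) (\<Omega> m)) | ks m.
            ks \<in> selections N K \<and> m < M} \<le> 1"
proof -
  define F where "F ks = 1\<^sub>m N - Gmat N g \<mu> ks" for ks
  define nv where "nv ks = nG N \<sigma>2 g \<mu> ks" for ks
  define Bm where "Bm ks m = psi (F ks) ((1 / pbar m) \<cdot>\<^sub>v nv ks) (\<Omega> m)" for ks m
  have Fc: "F ks \<in> carrier_mat N N" for ks unfolding F_def by (rule F_carrier)
  have Fmv: "(F ks *\<^sub>v p) $ i = (\<Sum>j\<in>{0..<N}. frow g \<mu> i (ks i) j * p $ j)"
    if "p \<in> carrier_vec N" "i < N" for ks p i unfolding F_def using F_mv[OF that] .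
  have frow_nn: "0 \<le> frow g \<mu> i k j" if "i < N" "k \<in> {1..K i}" "j < N" for i k j
    using that g_nonneg g_direct mu_pos unfolding frow_def by auto
  have nval_pos: "0 < nval \<sigma>2 g \<mu> i k" if "i < N" "k \<in> {1..K i}" for i k
    using that g_direct mu_pos sigma_pos unfolding nval_def by auto
  have selD: "ks i \<in> {1..K i}" if "ks \<in> selections N K" "i < N" for ks i
    using that unfolding selections_def by auto
  have Fnn: "\<forall>i<N. \<forall>j<N. 0 \<le> F ks $$ (i,j)" if "ks \<in> selections N K" for ks
    using frow_nn selD[OF that] unfolding F_def by (auto simp: F_idx)
  have nvc: "nv ks \<in> carrier_vec N" for ks unfolding nv_def by (rule nG_carrier)
  have nvi: "nv ks $ i = nval \<sigma>2 g \<mu> i (ks i)" if "i < N" for ks i unfolding nv_def using nG_idx[OF that] .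
  have nvpos: "0 < nv ks $ i" if "ks \<in> selections N K" "i < N" for ks i
    using nvi[OF that(2)] nval_pos[OF that(2) selD[OF that]] by simp
  have Bc: "Bm ks m \<in> carrier_mat N N" for ks m unfolding Bm_def by (rule psi_carrier[OF Fc])
  have Bmv: "(Bm ks m *\<^sub>v p) $ i = (F ks *\<^sub>v p) $ i + nv ks $ i / pbar m * (\<Sum>j\<in>\<Omega> m. p $ j)"
    if "m < M" "p \<in> carrier_vec N" "i < N" for ks m p i
  proof -
    have d: "dim_vec (nv ks) = N" using nvc[of ks] by auto
    show ?thesis
    unfolding Bm_def using psi_mv[OF Fc[of ks] _ that(2) _ that(3), of "(1 / pbar m) \<cdot>\<^sub>v nv ks" "\<Omega> m"]
      Omega that nvc d by simp
  qed
  have Bnn: "\<forall>i<N. \<forall>j<N. 0 \<le> Bm ks m $$ (i,j)" if "ks \<in> selections N K" "m < M" for ks m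
  proof (intro allI impI)
    fix i j assume ij: "i < N" "j < N"
    have "Bm ks m $$ (i,j) = F ks $$ (i,j) + (if j \<in> \<Omega> m then nv ks $ i / pbar m else 0)"
      unfolding Bm_def psi_def using ij Fc[of ks] nvc[of ks] by auto
    moreover have "0 \<le> F ks $$ (i,j)" using Fnn[OF that(1)] ij by auto
    moreover have "0 \<le> nv ks $ i / pbar m" using nvpos[OF that(1) ij(1)] pbar_pos that(2)
      by (simp add: less_imp_le)
    ultimately show "0 \<le> Bm ks m $$ (i,j)" by auto
  qed
  have irrF: "\<forall>i<N. \<forall>j<N. i \<noteq> j \<longrightarrow> (i,j) \<in> {(a,b). a < N \<and> b < N \<and> F ks $$ (a,b) \<noteq> 0}\<^sup>+"
    if "ks \<in> selections N K" for ks
  proof -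
    have "Gmat N g \<mu> ks \<in> Gset N K g \<mu>" unfolding Gset_def using that by auto
    with irred have "irreducible_mat (F ks)" unfolding F_def by auto
    then obtain n where n: "F ks \<in> carrier_mat n n"
      and P: "\<forall>i<n. \<forall>j<n. i \<noteq> j \<longrightarrow> (i,j) \<in> {(a,b). a < n \<and> b < n \<and> F ks $$ (a,b) \<noteq> 0}\<^sup>+"
      unfolding irreducible_mat_def by auto
    have "n = N" using n Fc[of ks] by auto
    with P show ?thesis by simp
  qed
  have Omfin: "finite (\<Omega> m)" if "m < M" for m using Omega that finite_subset by blast
  have Bm_eq: "psi (1\<^sub>m N - Gmat N g \<mu> ks) ((1 / pbar m) \<cdot>\<^sub>v nG N \<sigma>2 g \<mu> ks) (\<Omega> m) = Bm ks m" for ks m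
    by (simp add: Bm_def F_def nv_def)
  have main: "(\<exists>p \<in> carrier_vec N.
            (\<forall>i<N. 0 \<le> p $ i) \<and>
            (\<forall>m<M. (\<Sum>i\<in>\<Omega> m. p $ i) \<le> pbar m) \<and>
            (\<forall>i<N. \<forall>k\<in>{1..K i}. arow N g \<mu> i k \<bullet> p \<ge> nval \<sigma>2 g \<mu> i k))
     \<longleftrightarrow> (\<forall>ks\<in>selections N K. \<forall>m<M. pf_eig (Bm ks m) \<le> 1)"
  proof
    assume "\<exists>p \<in> carrier_vec N.
            (\<forall>i<N. 0 \<le> p $ i) \<and>
            (\<forall>m<M. (\<Sum>i\<in>\<Omega> m. p $ i) \<le> pbar m) \<and>
            (\<forall>i<N. \<forall>k\<in>{1..K i}. arow N g \<mu> i k \<bullet> p \<ge> nval \<sigma>2 g \<mu> i k)"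
    then obtain p where p: "p \<in> carrier_vec N" and pnn: "\<forall>i<N. 0 \<le> p $ i"
      and budget: "\<forall>m<M. (\<Sum>i\<in>\<Omega> m. p $ i) \<le> pbar m"
      and feas: "\<forall>i<N. \<forall>k\<in>{1..K i}. arow N g \<mu> i k \<bullet> p \<ge> nval \<sigma>2 g \<mu> i k" by blast
    show "\<forall>ks\<in>selections N K. \<forall>m<M. pf_eig (Bm ks m) \<le> 1"
    proof (intro ballI allI impI)
      fix ks m assume ks: "ks \<in> selections N K" and m: "m < M"
      have row: "nv ks $ i \<le> p $ i - (F ks *\<^sub>v p) $ i" if i: "i < N" for i
      proof -
        have "nval \<sigma>2 g \<mu> i (ks i) \<le> arow N g \<mu> i (ks i) \<bullet> p" using feas i selD[OF ks i] by auto
        also have "\<dots> = p $ i - (F ks *\<^sub>v p) $ i" using arow_eq[OF p i] Fmv[OF p i] by simp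
        finally show ?thesis using nvi[OF i] by simp
      qed
      have ppos: "\<forall>i<N. 0 < p $ i"
      proof (intro allI impI)
        fix i assume i: "i < N"
        have "0 \<le> (F ks *\<^sub>v p) $ i" using mv_nonneg[OF Fc Fnn[OF ks] p pnn i] .
        then show "0 < p $ i" using row[OF i] nvpos[OF ks i] by linarith
      qed
      have Bp: "\<forall>i<N. (Bm ks m *\<^sub>v p) $ i \<le> p $ i"
      proof (intro allI impI)
        fix i assume i: "i < N"
        have S: "(\<Sum>j\<in>\<Omega> m. p $ j) \<le> pbar m" using budget m by auto
        have pb: "0 < pbar m" using pbar_pos m by auto
        have "nv ks $ i / pbar m * (\<Sum>j\<in>\<Omega> m. p $ j) \<le> nv ks $ i / pbar m * pbar m"
          using S nvpos[OF ks i] pb by (intro mult_left_mono) auto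
        also have "\<dots> = nv ks $ i" using pb by simp
        finally show "(Bm ks m *\<^sub>v p) $ i \<le> p $ i" using Bmv[where ks=ks, OF m p i] row[OF i] by linarith
      qed
      show "pf_eig (Bm ks m) \<le> 1" unfolding pf_eig_def
        by (rule sr_le1[OF Bc N_pos Bnn[OF ks m] p ppos Bp])
    qed
  next
    assume H: "\<forall>ks\<in>selections N K. \<forall>m<M. pf_eig (Bm ks m) \<le> 1"
    have m0: "0 < M" using M_pos by simp
    have noexp: False if ks: "ks \<in> selections N K" and w: "w \<in> carrier_vec N"
      and wnn: "\<forall>i<N. 0 \<le> w $ i" and j0: "j0 < N" "0 < w $ j0"
      and Fw: "\<forall>i<N. w $ i \<le> (F ks *\<^sub>v w) $ i" for ks w j0
    proof -
      obtain u where u: "u \<in> carrier_vec N" and upos: "\<forall>i<N. 0 < u $ i"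
        and Fu: "\<forall>i<N. u $ i \<le> (F ks *\<^sub>v u) $ i"
        using positivize[OF Fc Fnn[OF ks] irrF[OF ks] w wnn j0 Fw] by auto
      have Spos: "0 < (\<Sum>j\<in>\<Omega> 0. u $ j)"
      proof (rule sum_pos)
        show "finite (\<Omega> 0)" by (rule Omfin[OF m0])
        show "\<Omega> 0 \<noteq> {}" using Omega m0 by auto
        fix j assume "j \<in> \<Omega> 0"
        moreover have "\<Omega> 0 \<subseteq> {0..<N}" using Omega m0 by blast
        ultimately have "j < N" by auto
        thus "0 < u $ j" using upos by auto
      qed
      have "1 < spectral_radius (map_mat complex_of_real (Bm ks 0))"
      proof (rule growth2[OF Bc N_pos Bnn[OF ks m0] u upos, where \<delta> = "\<lambda>i. nv ks $ i / pbar 0 * (\<Sum>j\<in>\<Omega> 0. u $ j)"])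
        show "\<forall>i<N. u $ i + nv ks $ i / pbar 0 * (\<Sum>j\<in>\<Omega> 0. u $ j) \<le> (Bm ks 0 *\<^sub>v u) $ i"
          using Bmv[where ks=ks, OF m0 u] Fu by auto
        show "\<forall>i<N. 0 < nv ks $ i / pbar 0 * (\<Sum>j\<in>\<Omega> 0. u $ j)"
          using nvpos[OF ks] pbar_pos m0 Spos by auto
      qed
      with H ks m0 show False unfolding pf_eig_def by force
    qed
    have inj: "v = 0\<^sub>v N" if ks: "ks \<in> selections N K" and v: "v \<in> carrier_vec N"
      and Fv: "F ks *\<^sub>v v = v" for ks v
    proof (rule ccontr)
      assume "v \<noteq> 0\<^sub>v N"
      then obtain j0 where j0: "j0 < N" "v $ j0 \<noteq> 0"
        using v by (metis eq_vecI index_zero_vec(1) index_zero_vec(2) carrier_vecD)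
      define w where "w = vec N (\<lambda>i. \<bar>v $ i\<bar>)"
      have wc: "w \<in> carrier_vec N" unfolding w_def by simp
      have Fw: "\<forall>i<N. w $ i \<le> (F ks *\<^sub>v w) $ i"
      proof (intro allI impI)
        fix i assume i: "i < N"
        have "w $ i = \<bar>(F ks *\<^sub>v v) $ i\<bar>" using Fv i w_def by simp
        also have "\<dots> = \<bar>\<Sum>j\<in>{0..<N}. F ks $$ (i,j) * v $ j\<bar>" using mv_eq[OF Fc v i] by simp
        also have "\<dots> \<le> (\<Sum>j\<in>{0..<N}. \<bar>F ks $$ (i,j) * v $ j\<bar>)" by (rule sum_abs)
        also have "\<dots> = (\<Sum>j\<in>{0..<N}. F ks $$ (i,j) * w $ j)"
          using Fnn[OF ks] i by (intro sum.cong) (auto simp: w_def abs_mult)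
        also have "\<dots> = (F ks *\<^sub>v w) $ i" using mv_eq[OF Fc wc i] by simp
        finally show "w $ i \<le> (F ks *\<^sub>v w) $ i" .
      qed
      show False by (rule noexp[OF ks wc _ j0(1) _ Fw]) (use j0 in \<open>auto simp: w_def\<close>)
    qed
    have nonpos: "\<forall>i<N. d $ i \<le> 0" if ks: "ks \<in> selections N K" and d: "d \<in> carrier_vec N"
      and Fd: "\<forall>i<N. d $ i \<le> (F ks *\<^sub>v d) $ i" for ks d
    proof (rule ccontr)
      assume "\<not> (\<forall>i<N. d $ i \<le> 0)"
      then obtain j0 where j0: "j0 < N" "0 < d $ j0" by force
      define w where "w = vec N (\<lambda>i. max (d $ i) 0)"
      have wc: "w \<in> carrier_vec N" unfolding w_def by simp
      have dw: "\<forall>j<N. d $ j \<le> w $ j" by (auto simp: w_def)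
      have Fw: "\<forall>i<N. w $ i \<le> (F ks *\<^sub>v w) $ i"
      proof (intro allI impI)
        fix i assume i: "i < N"
        have a: "(F ks *\<^sub>v d) $ i \<le> (F ks *\<^sub>v w) $ i" by (rule mv_mono[OF Fc Fnn[OF ks] d wc dw i])
        have b: "0 \<le> (F ks *\<^sub>v w) $ i" by (rule mv_nonneg[OF Fc Fnn[OF ks] wc _ i]) (auto simp: w_def)
        show "w $ i \<le> (F ks *\<^sub>v w) $ i" using Fd i a b by (auto simp: w_def)
      qed
      show False by (rule noexp[OF ks wc _ j0(1) _ Fw]) (use j0 in \<open>auto simp: w_def\<close>)
    qed
    have exsol: "\<exists>p. p \<in> carrier_vec N \<and> (\<forall>i<N. p $ i = (F ks *\<^sub>v p) $ i + nv ks $ i)"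
      if ks: "ks \<in> selections N K" for ks
      using solve[OF Fc inj[OF ks] nvc] by blast
    define sol where "sol ks = (SOME p. p \<in> carrier_vec N \<and> (\<forall>i<N. p $ i = (F ks *\<^sub>v p) $ i + nv ks $ i))" for ks
    have solP: "sol ks \<in> carrier_vec N \<and> (\<forall>i<N. sol ks $ i = (F ks *\<^sub>v sol ks) $ i + nv ks $ i)"
      if ks: "ks \<in> selections N K" for ks
      unfolding sol_def by (rule someI_ex[OF exsol[OF ks]])
    define U where "U = (\<Union>i<N. {1..K i})"
    define XS where "XS = {xs. set xs \<subseteq> U \<and> length xs = N \<and> tofun N xs \<in> selections N K}"
    have XSfin: "finite XS"
      by (rule finite_subset[OF _ finite_XS[of K N]]) (auto simp: XS_def U_def)
    have "replicate N 1 \<in> XS"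
      unfolding XS_def U_def selections_def tofun_def using N_pos K_pos by auto
    hence XSne: "XS \<noteq> {}" by blast
    define \<phi> where "\<phi> xs = (\<Sum>i\<in>{0..<N}. sol (tofun N xs) $ i)" for xs
    have "Max (\<phi> ` XS) \<in> \<phi> ` XS" using XSfin XSne by (intro Max_in) auto
    then obtain xs0 where xs0: "xs0 \<in> XS" and xs0eq: "\<phi> xs0 = Max (\<phi> ` XS)" by auto
    have xs0max: "\<phi> xs \<le> \<phi> xs0" if "xs \<in> XS" for xs
      unfolding xs0eq using XSfin that by (intro Max_ge) auto
    define ks0 where "ks0 = tofun N xs0"
    have ks0: "ks0 \<in> selections N K" using xs0 unfolding XS_def ks0_def by auto
    define p where "p = sol ks0"
    have pc: "p \<in> carrier_vec N" and peq: "\<forall>i<N. p $ i = (F ks0 *\<^sub>v p) $ i + nv ks0 $ i"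
      using solP[OF ks0] unfolding p_def by auto
    have pnn: "\<forall>i<N. 0 \<le> p $ i"
    proof -
      have "\<forall>i<N. vec N (\<lambda>j. - p $ j) $ i \<le> 0"
      proof (rule nonpos[OF ks0 vec_carrier], intro allI impI)
        fix i assume i: "i < N"
        show "vec N (\<lambda>j. - p $ j) $ i \<le> (F ks0 *\<^sub>v vec N (\<lambda>j. - p $ j)) $ i"
          using mv_neg[OF Fc pc i] peq nvpos[OF ks0 i] i by auto
      qed
      thus ?thesis by auto
    qed
    have ppos: "\<forall>i<N. 0 < p $ i"
    proof (intro allI impI)
      fix i assume i: "i < N"
      have "0 \<le> (F ks0 *\<^sub>v p) $ i" using mv_nonneg[OF Fc Fnn[OF ks0] pc pnn i] .
      then show "0 < p $ i" using peq nvpos[OF ks0 i] i by auto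
    qed
    have feas: "\<forall>i<N. \<forall>k\<in>{1..K i}. nval \<sigma>2 g \<mu> i k \<le> arow N g \<mu> i k \<bullet> p"
    proof (intro allI impI ballI, rule ccontr)
      fix i k assume i: "i < N" and k: "k \<in> {1..K i}"
        and nf: "\<not> nval \<sigma>2 g \<mu> i k \<le> arow N g \<mu> i k \<bullet> p"
      define xs1 where "xs1 = xs0[i := k]"
      define ks1 where "ks1 = tofun N xs1"
      have len: "length xs0 = N" using xs0 unfolding XS_def by auto
      have ks1eq: "ks1 = ks0(i := k)"
        unfolding ks1_def ks0_def xs1_def tofun_def using i len by (auto simp: fun_eq_iff nth_list_update)
      have ks1: "ks1 \<in> selections N K" using ks0 k i unfolding ks1eq selections_def by auto
      have "k \<in> U" unfolding U_def using k i by blast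
      moreover have "set xs0 \<subseteq> U" using xs0 unfolding XS_def by blast
      ultimately have "set xs1 \<subseteq> U" using set_update_subset_insert[of xs0 i k]
        unfolding xs1_def by blast
      hence xs1: "xs1 \<in> XS" using ks1 len unfolding XS_def ks1_def xs1_def by auto
      define q where "q = sol ks1"
      have qc: "q \<in> carrier_vec N" and qeq: "\<forall>i<N. q $ i = (F ks1 *\<^sub>v q) $ i + nv ks1 $ i"
        using solP[OF ks1] unfolding q_def by auto
      have Fother: "(F ks1 *\<^sub>v v) $ j = (F ks0 *\<^sub>v v) $ j" if "v \<in> carrier_vec N" "j < N" "j \<noteq> i" for v j
        using Fmv[OF that(1,2)] that ks1eq by simp
      have nother: "nv ks1 $ j = nv ks0 $ j" if "j < N" "j \<noteq> i" for j
        using nvi[OF that(1)] that ks1eq by simp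
      have rowi: "p $ i < (F ks1 *\<^sub>v p) $ i + nv ks1 $ i"
      proof -
        have "(F ks1 *\<^sub>v p) $ i = (\<Sum>j\<in>{0..<N}. frow g \<mu> i k j * p $ j)"
          using Fmv[OF pc i] ks1eq by simp
        moreover have "nv ks1 $ i = nval \<sigma>2 g \<mu> i k" using nvi[OF i] ks1eq by simp
        ultimately show ?thesis using nf arow_eq[OF pc i, of g \<mu> k] by linarith
      qed
      have ple: "p $ j \<le> (F ks1 *\<^sub>v p) $ j + nv ks1 $ j" if j: "j < N" for j
      proof (cases "j = i")
        case True then show ?thesis using rowi by simp
      next
        case False then show ?thesis using Fother[OF pc j False] nother[OF j False] peq j by simp
      qed
      have "\<forall>j<N. vec N (\<lambda>j. p $ j - q $ j) $ j \<le> 0"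
      proof (rule nonpos[OF ks1 vec_carrier], intro allI impI)
        fix j assume j: "j < N"
        show "vec N (\<lambda>j. p $ j - q $ j) $ j \<le> (F ks1 *\<^sub>v vec N (\<lambda>j. p $ j - q $ j)) $ j"
          using mv_diff[OF Fc pc qc j] ple[OF j] j qeq by auto
      qed
      hence pq: "\<forall>j<N. p $ j \<le> q $ j" by auto
      have "(F ks1 *\<^sub>v p) $ i \<le> (F ks1 *\<^sub>v q) $ i" by (rule mv_mono[OF Fc Fnn[OF ks1] pc qc pq i])
      hence qi: "p $ i < q $ i" using rowi qeq i by auto
      have "\<phi> xs0 < \<phi> xs1"
        unfolding \<phi>_def ks0_def[symmetric] ks1_def[symmetric] p_def[symmetric] q_def[symmetric]
        by (rule sum_strict_mono_ex1) (use pq qi i in auto)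
      with xs0max[OF xs1] show False by simp
    qed
    have budget: "\<forall>m<M. (\<Sum>i\<in>\<Omega> m. p $ i) \<le> pbar m"
    proof (intro allI impI, rule ccontr)
      fix m assume m: "m < M" and nb: "\<not> (\<Sum>i\<in>\<Omega> m. p $ i) \<le> pbar m"
      define S where "S = (\<Sum>i\<in>\<Omega> m. p $ i)"
      have pb: "0 < pbar m" using pbar_pos m by auto
      have S1: "0 < S / pbar m - 1" using nb pb unfolding S_def by (simp add: field_simps)
      have "1 < spectral_radius (map_mat complex_of_real (Bm ks0 m))"
      proof (rule growth2[OF Bc N_pos Bnn[OF ks0 m] pc ppos, where \<delta> = "\<lambda>i. nv ks0 $ i * (S / pbar m - 1)"])
        show "\<forall>i<N. p $ i + nv ks0 $ i * (S / pbar m - 1) \<le> (Bm ks0 m *\<^sub>v p) $ i"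
        proof (intro allI impI)
          fix i assume i: "i < N"
          have "(Bm ks0 m *\<^sub>v p) $ i = (F ks0 *\<^sub>v p) $ i + nv ks0 $ i / pbar m * S"
            using Bmv[where ks=ks0, OF m pc i] unfolding S_def .
          also have "\<dots> = p $ i + nv ks0 $ i * (S / pbar m - 1)"
            using peq i by (simp add: algebra_simps)
          finally show "p $ i + nv ks0 $ i * (S / pbar m - 1) \<le> (Bm ks0 m *\<^sub>v p) $ i" by simp
        qed
        show "\<forall>i<N. 0 < nv ks0 $ i * (S / pbar m - 1)" using nvpos[OF ks0] S1 by auto
      qed
      with H ks0 m show False unfolding pf_eig_def by force
    qed
    show "\<exists>p \<in> carrier_vec N.
            (\<forall>i<N. 0 \<le> p $ i) \<and>
            (\<forall>m<M. (\<Sum>i\<in>\<Omega> m. p $ i) \<le> pbar m) \<and>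
            (\<forall>i<N. \<forall>k\<in>{1..K i}. arow N g \<mu> i k \<bullet> p \<ge> nval \<sigma>2 g \<mu> i k)"
      using pc pnn budget feas by blast
  qed
  have cong: "pf_eig (Bm ks m) = pf_eig (Bm ks' m)" if a: "\<forall>i<N. ks i = ks' i" for ks ks' m
    unfolding Bm_eq[symmetric] by (simp only: Gmat_cong[OF a] nG_cong[OF a])
  have iff: "Max {pf_eig (Bm ks m) | ks m. ks \<in> selections N K \<and> m < M} \<le> 1
     \<longleftrightarrow> (\<forall>ks\<in>selections N K. \<forall>m<M. pf_eig (Bm ks m) \<le> 1)"
    by (rule Max_set_iff[where f="\<lambda>ks m. pf_eig (Bm ks m)", OF cong M_pos K_pos])
  show ?thesis unfolding Bm_eq using iff main by simp
qed

end
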